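(* Let $\xi$ be a random index and $\{\mu_\xi\}$ probability measures on $\mathbb{R}^d$ with $\mu_\xi\propto\exp(-V_\xi)$ such that for every $\xi$, $\log\mu_\xi$ is $L_1$-Lipschitz and $\nabla\log\mu_\xi$ is $L_2$-Lipschitz, and let $\mu\propto\exp(\mathbb{E}_\xi[\log\mu_\xi])$. Then for any probability measure $\pi_t$ on $\mathbb{R}^d$, $$\mathbb{E}_{\pi_t}\big[\mathrm{tr}^+(\nabla^2\log\mu)\big]\le dL_2,\qquad \sup_{\boldsymbol{x}}\|\nabla\cdot\Sigma_{\rm SGD}(\boldsymbol{x})\|\le4(d+1)L_1L_2,\qquad \sup_{\boldsymbol{x}}\lambda_{\max}(\Sigma_{\rm SGD}(\boldsymbol{x}))\le4L_1^2,$$ where $\Sigma_{\rm SGD}(\boldsymbol{x})=\mathbb{E}_\xi[(\nabla\log\mu_\xi(\boldsymbol{x})-\nabla\mathbb{E}_\xi[\log\mu_\xi(\boldsymbol{x})])(\nabla\log\mu_\xi(\boldsymbol{x})-\nabla\mathbb{E}_\xi[\log\mu_\xi(\boldsymbol{x})])^\top]$.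
   Context: $\mathrm{tr}^+(A)$ denotes the sum of the absolute values of the eigenvalues of a symmetric matrix $A$. For a matrix field $\Sigma$, $\nabla\cdot\Sigma$ is the vector field with $i$-th component $\sum_j\partial_j\Sigma_{ij}$, and $\|\cdot\|$ is the Euclidean norm. $\lambda_{\max}$ is the largest eigenvalue. $\log\mu$, $\log\mu_\xi$ denote log-densities. *)

theory Defs
  imports "HOL-Analysis.Analysis" "HOL-Probability.Probability"
          "HOL-Computational_Algebra.Polynomial"
begin

text \<open>Gradient of a scalar field on R^d (R^d = real^'n, d = CARD('n)):
  the i-th component is the partial derivative in direction e_i.\<close>
definition grad :: "(real^'n \<Rightarrow> real) \<Rightarrow> real^'n \<Rightarrow> real^'n" where
  "grad f x = (\<chi> i. frechet_derivative f (at x) (axis i 1))"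

definition hess :: "(real^'n \<Rightarrow> real) \<Rightarrow> real^'n \<Rightarrow> real^'n^'n" where
  "hess f x = (\<chi> i j. frechet_derivative (\<lambda>y. grad f y $ i) (at x) (axis j 1))"

definition mdiv :: "(real^'n \<Rightarrow> real^'n^'n) \<Rightarrow> real^'n \<Rightarrow> real^'n" where
  "mdiv S x = (\<chi> i. \<Sum>j\<in>UNIV. frechet_derivative (\<lambda>y. S y $ i $ j) (at x) (axis j 1))"

definition outer :: "real^'n \<Rightarrow> real^'n \<Rightarrow> real^'n^'n" where
  "outer u v = (\<chi> i j. u $ i * v $ j)"

definition charpoly :: "real^'n^'n \<Rightarrow> real poly" where
  "charpoly A = det (\<chi> i j. (if i = j then [:0, 1:] else 0) - [:A $ i $ j:])"

text \<open>tr^+(A): sum of absolute values of the eigenvalues (with algebraic multiplicity);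
  for symmetric real A all eigenvalues are real roots of the characteristic polynomial.\<close>
definition tr_plus :: "real^'n^'n \<Rightarrow> real" where
  "tr_plus A = (\<Sum>r\<in>{r. poly (charpoly A) r = 0}. real (order r (charpoly A)) * \<bar>r\<bar>)"

definition lambda_max :: "real^'n^'n \<Rightarrow> real" where
  "lambda_max A = Max {r. poly (charpoly A) r = 0}"

text \<open>log mu_xi for mu_xi proportional to exp(-V_xi) (normalised w.r.t. Lebesgue measure).\<close>
definition log_dens :: "(real^'n \<Rightarrow> real) \<Rightarrow> real^'n \<Rightarrow> real" where
  "log_dens V x = - V x - ln (integral\<^sup>L lborel (\<lambda>y. exp (- V y)))"

definition Elog :: "'i measure \<Rightarrow> ('i \<Rightarrow> real^'n \<Rightarrow> real) \<Rightarrow> real^'n \<Rightarrow> real" where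
  "Elog P V x = (\<integral>\<xi>. log_dens (V \<xi>) x \<partial>P)"

definition log_mu :: "'i measure \<Rightarrow> ('i \<Rightarrow> real^'n \<Rightarrow> real) \<Rightarrow> real^'n \<Rightarrow> real" where
  "log_mu P V x = Elog P V x - ln (integral\<^sup>L lborel (\<lambda>y. exp (Elog P V y)))"

definition Sigma_SGD :: "'i measure \<Rightarrow> ('i \<Rightarrow> real^'n \<Rightarrow> real) \<Rightarrow> real^'n \<Rightarrow> real^'n^'n" where
  "Sigma_SGD P V x = (\<integral>\<xi>. outer (grad (log_dens (V \<xi>)) x - grad (Elog P V) x)
                                   (grad (log_dens (V \<xi>)) x - grad (Elog P V) x) \<partial>P)"

end

theory Submission
  imports Defs
begin

lemma meas_nth:
  fixes f :: "'a \<Rightarrow> 'b::euclidean_space^'n"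
  assumes "f \<in> borel_measurable M" shows "(\<lambda>x. f x $ i) \<in> borel_measurable M"
  by (rule borel_measurable_continuous_on[OF _ assms])
     (intro linear_continuous_on bounded_linear_vec_nth)

lemma bounded_linear_axis: "bounded_linear (axis i :: 'a::real_normed_vector \<Rightarrow> 'a^'n)"
proof (rule bounded_linear_intro[where K=1])
  fix x :: 'a
  have "norm (axis i x :: 'a^'n) = L2_set (\<lambda>j. if j = i then norm x else 0) UNIV"
    unfolding norm_vec_def by (intro L2_set_cong) (auto simp: axis_def)
  also have "\<dots> = norm x" by (simp add: L2_set_def if_distrib[of "\<lambda>t. t^2"] sum.delta cong: if_cong)
  finally show "norm (axis i x :: 'a^'n) \<le> norm x * 1" by simp
qed (auto simp: axis_def vec_eq_iff)

lemma vec_sum_axis: "(\<Sum>i\<in>UNIV. axis i (v $ i)) = (v::'b::comm_monoid_add^'n)"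
  by (simp add: vec_eq_iff axis_def sum.delta sum_component)

lemma meas_vec:
  fixes f :: "'a \<Rightarrow> 'b::euclidean_space^'n"
  assumes "\<And>i. (\<lambda>x. f x $ i) \<in> borel_measurable M" shows "f \<in> borel_measurable M"
proof -
  have "(\<lambda>x. \<Sum>i\<in>UNIV. axis i (f x $ i)) \<in> borel_measurable M"
  proof (rule borel_measurable_sum)
    fix i show "(\<lambda>x. axis i (f x $ i)) \<in> borel_measurable M"
      using borel_measurable_continuous_on[OF linear_continuous_on[OF bounded_linear_axis] assms] .
  qed
  then show ?thesis by (simp add: vec_sum_axis)
qed

lemma integrable_vec:
  fixes f :: "'a \<Rightarrow> 'b::euclidean_space^'n"
  assumes "\<And>i. integrable M (\<lambda>x. f x $ i)" shows "integrable M f"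
proof -
  have "integrable M (\<lambda>x. \<Sum>i\<in>UNIV. axis i (f x $ i))"
  proof (rule Bochner_Integration.integrable_sum)
    fix i show "integrable M (\<lambda>x. axis i (f x $ i))"
      using integrable_bounded_linear[OF bounded_linear_axis assms] .
  qed
  then show ?thesis by (simp add: vec_sum_axis)
qed

lemma int_le_c:
  assumes "prob_space M" "\<And>x. x \<in> space M \<Longrightarrow> f x \<le> c" "0 \<le> c"
  shows "integral\<^sup>L M f \<le> (c::real)"
proof (cases "integrable M f")
  case True
  interpret prob_space M by fact
  have "integral\<^sup>L M f \<le> integral\<^sup>L M (\<lambda>_. c)"
    using True assms(2) by (intro integral_mono) auto
  then show ?thesis using prob_space by simp
next
  case False then show ?thesis using assms(3) by (simp add: not_integrable_integral_eq)
qed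

lemma deriv_seq:
  fixes f :: "'a::real_normed_vector \<Rightarrow> 'b::real_normed_vector"
  assumes d: "(f has_derivative f') (at x)"
  shows "(\<lambda>n. real (Suc n) *\<^sub>R (f (x + (1 / real (Suc n)) *\<^sub>R h) - f x)) \<longlonglongrightarrow> f' h"
proof (cases "h = 0")
  case True
  have bl: "bounded_linear f'" using d by (simp add: has_derivative_at)
  then show ?thesis using True by (simp add: linear_simps)
next
  case False
  have bl: "bounded_linear f'" and lim: "(\<lambda>k. norm (f (x + k) - f x - f' k) / norm k) \<midarrow>0\<rightarrow> 0"
    using d by (simp_all add: has_derivative_at)
  define k where "k n = (1 / real (Suc n)) *\<^sub>R h" for n
  have "(\<lambda>n. 1 / real (Suc n)) \<longlonglongrightarrow> 0"
    using LIMSEQ_Suc[OF lim_1_over_n] by simp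
  from tendsto_scaleR[OF this tendsto_const[of h]]
  have k0: "k \<longlonglongrightarrow> 0" unfolding k_def by simp
  have "filterlim k (at 0) sequentially"
    by (rule filterlim_atI[OF k0]) (use False in \<open>auto simp: k_def\<close>)
  from filterlim_compose[OF lim this]
  have "(\<lambda>n. norm (f (x + k n) - f x - f' (k n)) / norm (k n) * norm h) \<longlonglongrightarrow> 0"
    by (rule tendsto_mult_left_zero)
  moreover have "norm (f (x + k n) - f x - f' (k n)) / norm (k n) * norm h =
      norm (real (Suc n) *\<^sub>R (f (x + k n) - f x) - f' h)" for n
  proof -
    have fk: "f' (k n) = (1 / real (Suc n)) *\<^sub>R f' h"
      unfolding k_def using bl by (simp add: linear_simps)
    have "real (Suc n) *\<^sub>R (f (x + k n) - f x) - f' h = real (Suc n) *\<^sub>R (f (x + k n) - f x - f' (k n))"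
      by (simp add: fk algebra_simps)
    then have "norm (real (Suc n) *\<^sub>R (f (x + k n) - f x) - f' h) = real (Suc n) * norm (f (x + k n) - f x - f' (k n))"
      by simp
    moreover have "norm (k n) = norm h / real (Suc n)" by (simp add: k_def)
    moreover have "a / (norm h / real (Suc n)) * norm h = real (Suc n) * a" for a
      using False by (simp add: field_simps)
    ultimately show ?thesis by metis
  qed
  ultimately have "(\<lambda>n. norm (real (Suc n) *\<^sub>R (f (x + k n) - f x) - f' h)) \<longlonglongrightarrow> 0" by simp
  then show ?thesis unfolding k_def tendsto_norm_zero_iff by (rule LIM_zero_cancel)
qed

lemma deriv_meas:
  fixes F :: "'i \<Rightarrow> 'a::real_normed_vector \<Rightarrow> 'b::{real_normed_vector, second_countable_topology}"
  assumes "\<And>\<xi>. \<xi> \<in> space M \<Longrightarrow> (F \<xi> has_derivative F' \<xi>) (at x)"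
    "\<And>y. (\<lambda>\<xi>. F \<xi> y) \<in> borel_measurable M"
  shows "(\<lambda>\<xi>. F' \<xi> h) \<in> borel_measurable M"
proof (rule borel_measurable_LIMSEQ_metric[where f="\<lambda>n \<xi>. real (Suc n) *\<^sub>R (F \<xi> (x + (1 / real (Suc n)) *\<^sub>R h) - F \<xi> x)"])
  fix n show "(\<lambda>\<xi>. real (Suc n) *\<^sub>R (F \<xi> (x + (1 / real (Suc n)) *\<^sub>R h) - F \<xi> x)) \<in> borel_measurable M"
    by (intro borel_measurable_scaleR borel_measurable_const borel_measurable_diff assms(2))
qed (rule deriv_seq[OF assms(1)])

lemma deriv_bound:
  fixes f :: "'a::real_normed_vector \<Rightarrow> 'b::real_normed_vector"
  assumes d: "(f has_derivative f') (at x)" and L: "\<And>y. norm (f y - f x) \<le> L * norm (y - x)"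
  shows "norm (f' h) \<le> L * norm h"
proof (rule LIMSEQ_le_const2[OF tendsto_norm[OF deriv_seq[OF d, of h]]])
  show "\<exists>N. \<forall>n\<ge>N. norm (real (Suc n) *\<^sub>R (f (x + (1 / real (Suc n)) *\<^sub>R h) - f x)) \<le> L * norm h"
  proof (intro exI allI impI)
    fix n :: nat
    have "norm (real (Suc n) *\<^sub>R (f (x + (1 / real (Suc n)) *\<^sub>R h) - f x))
        = real (Suc n) * norm (f (x + (1 / real (Suc n)) *\<^sub>R h) - f x)" by simp
    also have "\<dots> \<le> real (Suc n) * (L * norm ((1 / real (Suc n)) *\<^sub>R h))"
      using L[of "x + (1 / real (Suc n)) *\<^sub>R h"] by (intro mult_left_mono) auto
    also have "\<dots> = L * norm h" by simp
    finally show "norm (real (Suc n) *\<^sub>R (f (x + (1 / real (Suc n)) *\<^sub>R h) - f x)) \<le> L * norm h" .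
  qed
qed

lemma deriv_integral:
  fixes F :: "'i \<Rightarrow> 'a::euclidean_space \<Rightarrow> 'b::euclidean_space"
  assumes P: "prob_space M"
    and d: "\<And>\<xi>. \<xi> \<in> space M \<Longrightarrow> (F \<xi> has_derivative F' \<xi>) (at x)"
    and L: "\<And>\<xi> y z. \<xi> \<in> space M \<Longrightarrow> norm (F \<xi> y - F \<xi> z) \<le> L * norm (y - z)"
    and L0: "0 \<le> L"
    and m: "\<And>y. (\<lambda>\<xi>. F \<xi> y) \<in> borel_measurable M"
    and i: "\<And>y. integrable M (\<lambda>\<xi>. F \<xi> y)"
  shows "((\<lambda>y. \<integral>\<xi>. F \<xi> y \<partial>M) has_derivative (\<lambda>h. \<integral>\<xi>. F' \<xi> h \<partial>M)) (at x)"
proof -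
  interpret prob_space M by fact
  have mh: "(\<lambda>\<xi>. F' \<xi> h) \<in> borel_measurable M" for h
    by (rule deriv_meas[OF d m])
  have bh: "norm (F' \<xi> h) \<le> L * norm h" if "\<xi> \<in> space M" for \<xi> h
    by (rule deriv_bound[OF d[OF that] L[OF that]])
  have ih: "integrable M (\<lambda>\<xi>. F' \<xi> h)" for h
    by (rule integrable_const_bound[where B="L * norm h"]) (use bh mh in auto)
  have lin: "linear (F' \<xi>)" if "\<xi> \<in> space M" for \<xi>
    using has_derivative_bounded_linear[OF d[OF that]] bounded_linear.linear by blast
  have bl: "bounded_linear (\<lambda>h. \<integral>\<xi>. F' \<xi> h \<partial>M)"
  proof (rule bounded_linear_intro[where K=L])
    fix a b :: 'a
    have "(\<integral>\<xi>. F' \<xi> (a + b) \<partial>M) = (\<integral>\<xi>. F' \<xi> a + F' \<xi> b \<partial>M)"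
      by (rule Bochner_Integration.integral_cong[OF refl]) (simp add: lin linear_add)
    also have "\<dots> = (\<integral>\<xi>. F' \<xi> a \<partial>M) + (\<integral>\<xi>. F' \<xi> b \<partial>M)"
      by (rule Bochner_Integration.integral_add[OF ih ih])
    finally show "(\<integral>\<xi>. F' \<xi> (a + b) \<partial>M) = (\<integral>\<xi>. F' \<xi> a \<partial>M) + (\<integral>\<xi>. F' \<xi> b \<partial>M)" .
  next
    fix r :: real and a :: 'a
    have "(\<integral>\<xi>. F' \<xi> (r *\<^sub>R a) \<partial>M) = (\<integral>\<xi>. r *\<^sub>R F' \<xi> a \<partial>M)"
      by (rule Bochner_Integration.integral_cong[OF refl]) (simp add: lin linear_scale)
    then show "(\<integral>\<xi>. F' \<xi> (r *\<^sub>R a) \<partial>M) = r *\<^sub>R (\<integral>\<xi>. F' \<xi> a \<partial>M)" by simp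
  next
    fix a :: 'a
    have "norm (\<integral>\<xi>. F' \<xi> a \<partial>M) \<le> (\<integral>\<xi>. norm (F' \<xi> a) \<partial>M)" by (rule integral_norm_bound)
    also have "\<dots> \<le> L * norm a" by (rule int_le_c[OF P]) (use bh L0 in auto)
    finally show "norm (\<integral>\<xi>. F' \<xi> a \<partial>M) \<le> norm a * L" by (simp add: mult.commute)
  qed
  define Q where "Q h = (\<integral>\<xi>. norm (F \<xi> (x + h) - F \<xi> x - F' \<xi> h) / norm h \<partial>M)" for h
  have Qlim: "(Q \<longlongrightarrow> 0) (at 0)"
    unfolding tendsto_at_iff_sequentially comp_def
  proof (intro allI impI)
    fix X :: "nat \<Rightarrow> 'a" assume X: "\<forall>i. X i \<in> UNIV - {0}" "X \<longlonglongrightarrow> 0"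
    have fX: "filterlim X (at 0) sequentially"
      by (rule filterlim_atI[OF X(2)]) (use X(1) in auto)
    have "(\<lambda>n. \<integral>\<xi>. norm (F \<xi> (x + X n) - F \<xi> x - F' \<xi> (X n)) / norm (X n) \<partial>M) \<longlonglongrightarrow> (\<integral>\<xi>. 0 \<partial>M)"
    proof (rule integral_dominated_convergence[where w="\<lambda>_. 2 * L"])
      show "(\<lambda>\<xi>. 0::real) \<in> borel_measurable M" by simp
      show "(\<lambda>\<xi>. norm (F \<xi> (x + X n) - F \<xi> x - F' \<xi> (X n)) / norm (X n)) \<in> borel_measurable M" for n
        using m mh by measurable
      show "integrable M (\<lambda>_. 2 * L)" by simp
      show "AE \<xi> in M. (\<lambda>n. norm (F \<xi> (x + X n) - F \<xi> x - F' \<xi> (X n)) / norm (X n)) \<longlonglongrightarrow> 0"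
      proof (rule AE_I2)
        fix \<xi> assume "\<xi> \<in> space M"
        then have "(\<lambda>h. norm (F \<xi> (x + h) - F \<xi> x - F' \<xi> h) / norm h) \<midarrow>0\<rightarrow> 0"
          using d has_derivative_at by blast
        from filterlim_compose[OF this fX]
        show "(\<lambda>n. norm (F \<xi> (x + X n) - F \<xi> x - F' \<xi> (X n)) / norm (X n)) \<longlonglongrightarrow> 0" .
      qed
      show "AE \<xi> in M. norm (norm (F \<xi> (x + X n) - F \<xi> x - F' \<xi> (X n)) / norm (X n)) \<le> 2 * L" for n
      proof (rule AE_I2)
        fix \<xi> assume \<xi>: "\<xi> \<in> space M"
        have nz: "norm (X n) > 0" using X(1) by auto
        have "norm (F \<xi> (x + X n) - F \<xi> x - F' \<xi> (X n)) \<le> norm (F \<xi> (x + X n) - F \<xi> x) + norm (F' \<xi> (X n))"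
          by (rule norm_triangle_ineq4)
        also have "\<dots> \<le> L * norm (X n) + L * norm (X n)"
          using L[OF \<xi>, of "x + X n" x] bh[OF \<xi>, of "X n"] by simp
        finally have "norm (F \<xi> (x + X n) - F \<xi> x - F' \<xi> (X n)) \<le> (2 * L) * norm (X n)" by simp
        then show "norm (norm (F \<xi> (x + X n) - F \<xi> x - F' \<xi> (X n)) / norm (X n)) \<le> 2 * L"
          using nz by (simp add: divide_le_eq)
      qed
    qed
    then show "(\<lambda>n. Q (X n)) \<longlonglongrightarrow> 0" by (simp add: Q_def)
  qed
  have "(\<lambda>h. norm ((\<integral>\<xi>. F \<xi> (x + h) \<partial>M) - (\<integral>\<xi>. F \<xi> x \<partial>M) - (\<integral>\<xi>. F' \<xi> h \<partial>M)) / norm h) \<midarrow>0\<rightarrow> 0"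
  proof (rule tendsto_sandwich[OF _ _ tendsto_const Qlim])
    show "\<forall>\<^sub>F h in at 0. 0 \<le> norm ((\<integral>\<xi>. F \<xi> (x + h) \<partial>M) - (\<integral>\<xi>. F \<xi> x \<partial>M) - (\<integral>\<xi>. F' \<xi> h \<partial>M)) / norm h"
      by simp
    show "\<forall>\<^sub>F h in at 0. norm ((\<integral>\<xi>. F \<xi> (x + h) \<partial>M) - (\<integral>\<xi>. F \<xi> x \<partial>M) - (\<integral>\<xi>. F' \<xi> h \<partial>M)) / norm h \<le> Q h"
    proof (rule always_eventually, rule allI)
      fix h :: 'a
      have "(\<integral>\<xi>. F \<xi> (x + h) \<partial>M) - (\<integral>\<xi>. F \<xi> x \<partial>M) - (\<integral>\<xi>. F' \<xi> h \<partial>M)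
          = (\<integral>\<xi>. F \<xi> (x + h) - F \<xi> x - F' \<xi> h \<partial>M)"
        using i ih by simp
      then have "norm ((\<integral>\<xi>. F \<xi> (x + h) \<partial>M) - (\<integral>\<xi>. F \<xi> x \<partial>M) - (\<integral>\<xi>. F' \<xi> h \<partial>M)) / norm h
          \<le> (\<integral>\<xi>. norm (F \<xi> (x + h) - F \<xi> x - F' \<xi> h) \<partial>M) / norm h"
        using integral_norm_bound by (simp add: divide_right_mono)
      also have "\<dots> = Q h" unfolding Q_def by simp
      finally show "norm ((\<integral>\<xi>. F \<xi> (x + h) \<partial>M) - (\<integral>\<xi>. F \<xi> x \<partial>M) - (\<integral>\<xi>. F' \<xi> h \<partial>M)) / norm h \<le> Q h" .
    qed
  qed
  with bl show ?thesis by (simp add: has_derivative_at)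
qed

lemma deriv_integrable:
  fixes F :: "'i \<Rightarrow> 'a::euclidean_space \<Rightarrow> 'b::euclidean_space"
  assumes P: "prob_space M"
    and d: "\<And>\<xi>. \<xi> \<in> space M \<Longrightarrow> (F \<xi> has_derivative F' \<xi>) (at x)"
    and L: "\<And>\<xi> y z. \<xi> \<in> space M \<Longrightarrow> norm (F \<xi> y - F \<xi> z) \<le> L * norm (y - z)"
    and m: "\<And>y. (\<lambda>\<xi>. F \<xi> y) \<in> borel_measurable M"
  shows "integrable M (\<lambda>\<xi>. F' \<xi> h)"
proof -
  interpret prob_space M by fact
  have mh: "(\<lambda>\<xi>. F' \<xi> h) \<in> borel_measurable M"
    by (rule deriv_meas[OF d m])
  have bh: "norm (F' \<xi> h) \<le> L * norm h" if "\<xi> \<in> space M" for \<xi>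
    by (rule deriv_bound[OF d[OF that] L[OF that]])
  show ?thesis
    by (rule integrable_const_bound[where B="L * norm h"]) (use bh mh in auto)
qed


lemma charpoly_eval:
  "poly (charpoly A) r = det (\<chi> i j. (if i = j then r else 0) - A$i$j)"
proof -
  have *: "poly ((if i = j then [:0, 1:] else 0) - [:a:]) r = (if i = j then r else 0) - a" for i j :: 'n and a
    by auto
  have **: "poly (if c then [:0, 1:] else 0) r = (if c then r else 0)" for c
    by auto
  show ?thesis unfolding charpoly_def det_def by (simp add: poly_sum poly_prod * **)
qed

lemma charmat_mult:
  "(\<chi> i j. (if i = j then r else 0) - A$i$j) *v v = r *\<^sub>R v - A *v v"
proof -
  have *: "(\<lambda>j. (if i = j then r else 0) * v$j) = (\<lambda>j. if i = j then r * v$j else 0)" for i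
    by auto
  have **: "(\<Sum>j\<in>UNIV. (if i = j then r else 0) * v $ j) = r * v $ i" for i
    unfolding * by simp
  show ?thesis by (simp add: vec_eq_iff matrix_vector_mult_def left_diff_distrib sum_subtractf **)
qed

lemma eig_of_root:
  fixes A :: "real^'n^'n"
  assumes "poly (charpoly A) r = 0" shows "\<exists>v. v \<noteq> 0 \<and> A *v v = r *\<^sub>R v"
proof -
  let ?M = "(\<chi> i j. (if i = j then r else 0) - A$i$j) :: real^'n^'n"
  have "\<not> invertible ?M" using assms by (simp add: charpoly_eval invertible_det_nz)
  then have "\<not> (\<forall>x. ?M *v x = 0 \<longrightarrow> x = 0)"
    by (simp add: invertible_left_inverse matrix_left_invertible_ker)
  then obtain v where "?M *v v = 0" "v \<noteq> 0" by blast
  then show ?thesis by (intro exI[of _ v]) (simp add: charmat_mult)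
qed

lemma root_of_eig:
  fixes A :: "real^'n^'n"
  assumes "v \<noteq> 0" "A *v v = r *\<^sub>R v" shows "poly (charpoly A) r = 0"
proof -
  let ?M = "(\<chi> i j. (if i = j then r else 0) - A$i$j) :: real^'n^'n"
  have "?M *v v = 0" using assms by (simp add: charmat_mult)
  then have "\<not> invertible ?M" using assms(1)
    by (auto simp add: invertible_left_inverse matrix_left_invertible_ker)
  then show ?thesis by (simp add: charpoly_eval invertible_det_nz)
qed

lemma degree_charpoly: "degree (charpoly (A::real^'n^'n)) \<le> CARD('n)"
  unfolding charpoly_def det_def
proof (rule degree_sum_le)
  fix p
  have "degree (\<Prod>i\<in>UNIV. (\<chi> i j. (if i = j then [:0, 1:] else 0) - [:A $ i $ j:]) $ i $ p i)
      \<le> sum (degree \<circ> (\<lambda>i. (\<chi> i j. (if i = j then [:0, 1:] else 0) - [:A $ i $ j:]) $ i $ p i)) UNIV"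
    by (rule degree_prod_sum_le) simp
  also have "\<dots> \<le> sum (\<lambda>_. 1) (UNIV::'n set)"
    by (intro sum_mono) (auto intro: degree_diff_le)
  finally have X: "degree (\<Prod>i\<in>UNIV. (\<chi> i j. (if i = j then [:0, 1:] else 0) - [:A $ i $ j:]) $ i $ p i) \<le> CARD('n)"
    by simp
  show "degree (of_int (sign p) * (\<Prod>i\<in>UNIV. (\<chi> i j. (if i = j then [:0, 1:] else 0) - [:A $ i $ j:]) $ i $ p i)) \<le> CARD('n)"
    by (rule order_trans[OF degree_mult_le]) (use X in simp)
qed simp

lemma sum_order_bound:
  fixes p :: "real poly"
  assumes "\<And>r. poly p r = 0 \<Longrightarrow> \<bar>r\<bar> \<le> c" "0 \<le> c" "degree p \<le> d"
  shows "(\<Sum>r\<in>{r. poly p r = 0}. real (order r p) * \<bar>r\<bar>) \<le> real d * c"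
proof (cases "p = 0")
  case True then show ?thesis using assms by (simp add: infinite_UNIV_char_0)
next
  case False
  have "(\<Sum>r\<in>{r. poly p r = 0}. real (order r p) * \<bar>r\<bar>) \<le> (\<Sum>r\<in>{r. poly p r = 0}. real (order r p) * c)"
    by (intro sum_mono mult_left_mono assms) auto
  also have "\<dots> = real (\<Sum>r\<in>{r. poly p r = 0}. order r p) * c" by (simp add: sum_distrib_right)
  also have "\<dots> \<le> real d * c"
  proof (intro mult_right_mono assms(2))
    have "(\<Sum>r\<in>{r. poly p r = 0}. order r p) \<le> d"
      using sum_order_le_degree[OF False] assms(3) by simp
    then show "real (\<Sum>r\<in>{r. poly p r = 0}. order r p) \<le> real d" by (simp only: of_nat_le_iff)
  qed
  finally show ?thesis .
qed

lemma sym_inner: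
  fixes A :: "real^'n^'n"
  assumes sym: "\<And>i j. A$i$j = A$j$i"
  shows "x \<bullet> (A *v y) = y \<bullet> (A *v x)"
proof -
  have T: "transpose A = A" using sym by (simp add: vec_eq_iff transpose_def)
  have "x \<bullet> (A *v y) = (x v* A) \<bullet> y" by (simp add: dot_lmul_matrix)
  also have "x v* A = A *v x" using vector_transpose_matrix[of x A] T by simp
  finally show ?thesis by (simp add: inner_commute)
qed

lemma sym_eig:
  fixes A :: "real^'n^'n"
  assumes sym: "\<And>i j. A$i$j = A$j$i"
  shows "\<exists>r. poly (charpoly A) r = 0"
proof -
  define q where "q v = v \<bullet> (A *v v)" for v :: "real^'n"
  have cq: "continuous_on (sphere 0 1) q" unfolding q_def
    by (intro continuous_intros linear_continuous_on matrix_vector_mul_bounded_linear)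
  have ne: "sphere (0::real^'n) 1 \<noteq> {}"
  proof -
    have "(axis undefined (1::real) :: real^'n) \<in> sphere 0 1" by simp
    then show ?thesis by blast
  qed
  obtain v0 where v0: "v0 \<in> sphere 0 1" and mx: "\<And>y. y \<in> sphere 0 1 \<Longrightarrow> q y \<le> q v0"
    using continuous_attains_sup[OF compact_sphere ne cq] by blast
  define lam where "lam = q v0"
  have nv0: "norm v0 = 1" using v0 by simp
  have qs: "q (c *\<^sub>R w) = c^2 * q w" for c w
    by (simp add: q_def matrix_vector_mult_scaleR power2_eq_square)
  define p where "p w = lam * (w \<bullet> w) - q w" for w
  have p0: "p w \<ge> 0" for w
  proof (cases "w = 0")
    case True then show ?thesis by (simp add: p_def q_def)
  next
    case False
    define u where "u = (1 / norm w) *\<^sub>R w"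
    have "u \<in> sphere 0 1" using False by (simp add: u_def)
    then have "q u \<le> lam" using mx lam_def by simp
    moreover have "w = norm w *\<^sub>R u" using False by (simp add: u_def)
    then have "q w = (norm w)^2 * q u" using qs by metis
    moreover have "w \<bullet> w = (norm w)^2" by (simp add: power2_norm_eq_inner)
    ultimately show ?thesis unfolding p_def
      by (metis diff_ge_0_iff_ge mult.commute mult_right_mono zero_le_power2)
  qed
  have pv0: "p v0 = 0" using nv0 by (simp add: p_def lam_def inner_commute power2_norm_eq_inner[symmetric])
  define u where "u = lam *\<^sub>R v0 - A *v v0"
  have exp: "p (v0 + t *\<^sub>R u) = 2 * t * (u \<bullet> u) + t^2 * p u" for t
  proof -
    have s: "v0 \<bullet> (A *v u) = u \<bullet> (A *v v0)" by (rule sym_inner[OF sym])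
    have "p (v0 + t *\<^sub>R u) = p v0 + t * (2 * lam * (u \<bullet> v0) - u \<bullet> (A *v v0) - v0 \<bullet> (A *v u)) + t^2 * p u"
      by (simp add: p_def q_def matrix_vector_right_distrib matrix_vector_mult_scaleR inner_add_left
          inner_add_right inner_commute[of v0 u] algebra_simps power2_eq_square)
    also have "2 * lam * (u \<bullet> v0) - u \<bullet> (A *v v0) - v0 \<bullet> (A *v u) = 2 * (u \<bullet> u)"
      unfolding s by (simp add: u_def inner_diff_left inner_diff_right algebra_simps)
    finally show ?thesis using pv0 by simp
  qed
  define m where "m = u \<bullet> u"
  define c where "c = p u"
  have c0: "c \<ge> 0" using p0 c_def by simp
  have m0: "m \<ge> 0" by (simp add: m_def)
  define t where "t = - m / (c + 1)"
  have "0 \<le> 2 * t * m + t^2 * c"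
    using p0[of "v0 + t *\<^sub>R u"] unfolding exp m_def c_def .
  then have A: "0 \<le> (c + 1)^2 * (2 * t * m + t^2 * c)" by simp
  have e: "(c + 1) * t = - m" using c0 by (simp add: t_def)
  have "(c + 1)^2 * (2 * t * m + t^2 * c) = 2 * (c + 1) * m * ((c + 1) * t) + ((c + 1) * t)^2 * c"
    by (simp add: power2_eq_square algebra_simps)
  also have "\<dots> = - 2 * (c + 1) * m * m + m * m * c" unfolding e by (simp add: power2_eq_square algebra_simps)
  finally have "m * m * (c + 2) \<le> 0" using A by (simp add: algebra_simps)
  then have "m = 0" using c0 m0
    by (metis add_nonneg_pos mult_eq_0_iff mult_le_0_iff mult_nonneg_nonneg zero_less_numeral linorder_not_le order.order_iff_strict)
  then have "u = 0" by (simp add: m_def)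
  then have "A *v v0 = lam *\<^sub>R v0" by (simp add: u_def)
  moreover have "v0 \<noteq> 0" using nv0 by auto
  ultimately show ?thesis using root_of_eig by blast
qed


lemma outer_nth[simp]: "outer u v $ i $ j = u$i * v$j"
  by (simp add: outer_def)

lemma norm_outer: "norm (outer u v) = norm u * norm v"
proof -
  have r: "outer u v $ i = u$i *\<^sub>R v" for i by (simp add: vec_eq_iff)
  have "norm (outer u v) = L2_set (\<lambda>i. norm (outer u v $ i)) UNIV"
    by (rule norm_vec_def)
  also have "\<dots> = L2_set (\<lambda>i. norm v * \<bar>u$i\<bar>) UNIV"
    by (intro L2_set_cong refl) (simp only: r norm_scaleR real_norm_def mult.commute)
  also have "\<dots> = norm v * L2_set (\<lambda>i. \<bar>u$i\<bar>) UNIV"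
    by (simp add: L2_set_right_distrib)
  also have "L2_set (\<lambda>i. \<bar>u$i\<bar>) UNIV = norm u"
    unfolding norm_vec_def by simp
  finally show ?thesis by (simp add: mult.commute)
qed

lemma bb_outer: "bounded_bilinear (outer :: real^'n \<Rightarrow> real^'n \<Rightarrow> real^'n^'n)"
  by (rule bounded_bilinear.intro)
     (auto simp: vec_eq_iff algebra_simps norm_outer intro!: exI[of _ 1])

lemma vec_expand: "v = (\<Sum>j\<in>UNIV. v$j *\<^sub>R axis j (1::real))"
  using basis_expansion[of v] by (simp add: scalar_mult_eq_scaleR)

lemma hess_mv:
  fixes \<phi> :: "real^'n \<Rightarrow> real^'n"
  assumes d: "(\<phi> has_derivative D) (at x)"
  shows "(\<chi> i j. frechet_derivative (\<lambda>y. \<phi> y $ i) (at x) (axis j 1)) *v v = D v"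
proof -
  have fd: "frechet_derivative (\<lambda>y. \<phi> y $ i) (at x) = (\<lambda>h. D h $ i)" for i
    by (rule frechet_derivative_at[symmetric], rule bounded_linear.has_derivative[OF bounded_linear_vec_nth d])
  have lin: "linear D" using has_derivative_bounded_linear[OF d] bounded_linear.linear by blast
  have "D v = D (\<Sum>j\<in>UNIV. v$j *\<^sub>R axis j 1)" using vec_expand[of v] by simp
  also have "\<dots> = (\<Sum>j\<in>UNIV. v$j *\<^sub>R D (axis j 1))" by (simp add: linear_sum[OF lin] linear_scale[OF lin])
  finally show ?thesis
    by (simp add: vec_eq_iff matrix_vector_mult_def fd sum_component mult.commute)
qed

lemma grad_deriv:
  fixes f :: "real^'n \<Rightarrow> real"
  assumes "f differentiable (at y)"
  shows "(f has_derivative (\<lambda>h. grad f y \<bullet> h)) (at y)"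
proof -
  let ?D = "frechet_derivative f (at y)"
  have d: "(f has_derivative ?D) (at y)" using assms frechet_derivative_works by blast
  have lin: "linear ?D" using has_derivative_bounded_linear[OF d] bounded_linear.linear by blast
  have "?D h = grad f y \<bullet> h" for h
  proof -
    have "?D h = ?D (\<Sum>j\<in>UNIV. h$j *\<^sub>R axis j 1)" using vec_expand[of h] by simp
    also have "\<dots> = (\<Sum>j\<in>UNIV. h$j * ?D (axis j 1))" by (simp add: linear_sum[OF lin] linear_scale[OF lin])
    finally show ?thesis by (simp add: grad_def inner_vec_def mult.commute)
  qed
  then have "?D = (\<lambda>h. grad f y \<bullet> h)" by blast
  then show ?thesis using d by simp
qed


theorem lemma3:
  fixes P :: "'i measure" and V :: "'i \<Rightarrow> real^'n \<Rightarrow> real"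
    and L1 L2 :: real and \<pi> :: "(real^'n) measure"
  assumes P: "prob_space P"
    and V_int: "\<And>\<xi>. \<xi> \<in> space P \<Longrightarrow> integrable lborel (\<lambda>x. exp (- V \<xi> x))"
    and meas: "\<And>x. (\<lambda>\<xi>. log_dens (V \<xi>) x) \<in> borel_measurable P"
    and Eint: "\<And>x. integrable P (\<lambda>\<xi>. log_dens (V \<xi>) x)"
    and mu_int: "integrable lborel (\<lambda>x. exp (Elog P V x))"
    and diff1: "\<And>\<xi> x. \<xi> \<in> space P \<Longrightarrow> log_dens (V \<xi>) differentiable (at x)"
    and diff2: "\<And>\<xi> x. \<xi> \<in> space P \<Longrightarrow> grad (log_dens (V \<xi>)) differentiable (at x)"
    and lip1: "\<And>\<xi>. \<xi> \<in> space P \<Longrightarrow> lipschitz_on L1 UNIV (log_dens (V \<xi>))"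
    and lip2: "\<And>\<xi>. \<xi> \<in> space P \<Longrightarrow> lipschitz_on L2 UNIV (grad (log_dens (V \<xi>)))"
    and pi: "prob_space \<pi>" "sets \<pi> = sets borel"
  shows "(\<integral>x. tr_plus (hess (log_mu P V) x) \<partial>\<pi>) \<le> real CARD('n) * L2
    \<and> (\<forall>x. norm (mdiv (Sigma_SGD P V) x) \<le> 4 * (real CARD('n) + 1) * L1 * L2)
    \<and> (\<forall>x. lambda_max (Sigma_SGD P V x) \<le> 4 * L1\<^sup>2)"
proof -
  interpret P: prob_space P by fact
  define f where "f \<xi> = log_dens (V \<xi>)" for \<xi>
  define g where "g \<xi> = grad (f \<xi>)" for \<xi>
  define gb where "gb y = (\<integral>\<xi>. g \<xi> y \<partial>P)" for y
  obtain \<xi>0 where \<xi>0: "\<xi>0 \<in> space P" using P.not_empty by blast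
  have L10: "0 \<le> L1" using lip1[OF \<xi>0] by (simp add: lipschitz_on_def)
  have L20: "0 \<le> L2" using lip2[OF \<xi>0] by (simp add: lipschitz_on_def)
  have lipf: "norm (f \<xi> y - f \<xi> z) \<le> L1 * norm (y - z)" if "\<xi> \<in> space P" for \<xi> y z
    using lip1[OF that] unfolding lipschitz_on_def f_def by (simp add: dist_norm)
  have lipg: "norm (g \<xi> y - g \<xi> z) \<le> L2 * norm (y - z)" if "\<xi> \<in> space P" for \<xi> y z
    using lip2[OF that] unfolding lipschitz_on_def g_def f_def by (simp add: dist_norm)
  have df: "(f \<xi> has_derivative (\<lambda>h. g \<xi> y \<bullet> h)) (at y)" if "\<xi> \<in> space P" for \<xi> y
    unfolding g_def f_def by (rule grad_deriv[OF diff1[OF that]])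
  have gbound: "norm (g \<xi> y) \<le> L1" if "\<xi> \<in> space P" for \<xi> y
  proof -
    have "norm (g \<xi> y \<bullet> g \<xi> y) \<le> L1 * norm (g \<xi> y)"
      by (rule deriv_bound[OF df[OF that] lipf[OF that]])
    then have "norm (g \<xi> y) * norm (g \<xi> y) \<le> L1 * norm (g \<xi> y)"
      by (simp add: power2_norm_eq_inner[symmetric] power2_eq_square)
    then show ?thesis using L10
      by (metis mult_le_cancel_right norm_ge_zero order.strict_iff_order mult_eq_0_iff order_trans)
  qed
  have fmeas: "(\<lambda>\<xi>. f \<xi> y) \<in> borel_measurable P" for y unfolding f_def by (rule meas)
  have gmeas: "(\<lambda>\<xi>. g \<xi> y) \<in> borel_measurable P" for y
  proof (rule meas_vec)
    fix i
    have "(\<lambda>\<xi>. g \<xi> y \<bullet> axis i 1) \<in> borel_measurable P"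
      by (rule deriv_meas[where F=f and F'="\<lambda>\<xi> h. g \<xi> y \<bullet> h", OF df fmeas])
    then show "(\<lambda>\<xi>. g \<xi> y $ i) \<in> borel_measurable P" by (simp add: cart_eq_inner_axis)
  qed
  have gint: "integrable P (\<lambda>\<xi>. g \<xi> y)" for y
    by (rule P.integrable_const_bound[where B=L1]) (use gbound gmeas in auto)
  have Elog_eq: "Elog P V = (\<lambda>y. \<integral>\<xi>. f \<xi> y \<partial>P)" by (simp add: Elog_def f_def fun_eq_iff)
  have dElog: "(Elog P V has_derivative (\<lambda>h. gb y \<bullet> h)) (at y)" for y
  proof -
    have "((\<lambda>y. \<integral>\<xi>. f \<xi> y \<partial>P) has_derivative (\<lambda>h. \<integral>\<xi>. g \<xi> y \<bullet> h \<partial>P)) (at y)"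
      proof (rule deriv_integral[OF P, where L=L1])
      show "integrable P (\<lambda>\<xi>. f \<xi> y)" for y unfolding f_def by (rule Eint)
    qed (blast intro: df lipf L10 fmeas)+
    moreover have "(\<lambda>h. \<integral>\<xi>. g \<xi> y \<bullet> h \<partial>P) = (\<lambda>h. gb y \<bullet> h)"
      by (simp add: gb_def gint)
    ultimately show ?thesis by (simp add: Elog_eq)
  qed
  have grad_Elog: "grad (Elog P V) = gb"
  proof
    fix y
    show "grad (Elog P V) y = gb y"
      unfolding grad_def frechet_derivative_at[OF dElog[of y], symmetric]
      by (simp add: vec_eq_iff inner_axis)
  qed
  have grad_logmu: "grad (log_mu P V) = gb"
  proof
    fix y
    have dl: "(log_mu P V has_derivative (\<lambda>h. gb y \<bullet> h - 0)) (at y)"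
      unfolding log_mu_def by (intro has_derivative_diff dElog has_derivative_const)
    then show "grad (log_mu P V) y = gb y"
      unfolding grad_def frechet_derivative_at[OF dl, symmetric]
      by (simp add: vec_eq_iff inner_axis)
  qed
  have dg: "(g \<xi> has_derivative frechet_derivative (g \<xi>) (at y)) (at y)" if "\<xi> \<in> space P" for \<xi> y
    using diff2[OF that] frechet_derivative_works unfolding g_def f_def by blast
  define Db where "Db y h = (\<integral>\<xi>. frechet_derivative (g \<xi>) (at y) h \<partial>P)" for y h
  have dgb: "(gb has_derivative Db y) (at y)" for y
    unfolding gb_def Db_def[abs_def] by (rule deriv_integral[OF P, where L=L2]) (auto intro: dg lipg L20 gmeas gint)
  have lipgb: "norm (gb y - gb z) \<le> L2 * norm (y - z)" for y z
  proof -
    have "gb y - gb z = (\<integral>\<xi>. g \<xi> y - g \<xi> z \<partial>P)" unfolding gb_def using gint by simp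
    also have "norm \<dots> \<le> (\<integral>\<xi>. norm (g \<xi> y - g \<xi> z) \<partial>P)" by (rule integral_norm_bound)
    also have "\<dots> \<le> L2 * norm (y - z)" by (rule int_le_c[OF P]) (use lipg L20 in auto)
    finally show ?thesis .
  qed
  have gbbound: "norm (gb y) \<le> L1" for y
  proof -
    have "norm (gb y) \<le> (\<integral>\<xi>. norm (g \<xi> y) \<partial>P)" unfolding gb_def by (rule integral_norm_bound)
    also have "\<dots> \<le> L1" by (rule int_le_c[OF P]) (use gbound L10 in auto)
    finally show ?thesis .
  qed
  have part1: "tr_plus (hess (log_mu P V) x) \<le> real CARD('n) * L2" for x
  proof -
    define H where "H = hess (log_mu P V) x"
    have H: "H = (\<chi> i j. frechet_derivative (\<lambda>y. gb y $ i) (at x) (axis j 1))"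
      unfolding H_def hess_def grad_logmu ..
    have Hv: "H *v v = Db x v" for v unfolding H by (rule hess_mv[OF dgb])
    have rb: "\<bar>r\<bar> \<le> L2" if r: "poly (charpoly H) r = 0" for r
    proof -
      obtain v where v: "v \<noteq> 0" "H *v v = r *\<^sub>R v" using eig_of_root[OF r] by blast
      have "\<bar>r\<bar> * norm v = norm (Db x v)" using v Hv by simp
      also have "\<dots> \<le> L2 * norm v" by (rule deriv_bound[OF dgb lipgb])
      finally show ?thesis using v by simp
    qed
    show ?thesis unfolding H_def[symmetric] tr_plus_def
      by (rule sum_order_bound[OF rb L20 degree_charpoly])
  qed
  have P1: "(\<integral>x. tr_plus (hess (log_mu P V) x) \<partial>\<pi>) \<le> real CARD('n) * L2"
    by (rule int_le_c[OF pi(1)]) (use part1 L20 in auto)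
  define a where "a \<xi> y = g \<xi> y - gb y" for \<xi> y
  have Sig: "Sigma_SGD P V y = (\<integral>\<xi>. outer (a \<xi> y) (a \<xi> y) \<partial>P)" for y
    by (simp add: Sigma_SGD_def a_def g_def f_def grad_Elog)
  have abound: "norm (a \<xi> y) \<le> 2 * L1" if "\<xi> \<in> space P" for \<xi> y
  proof -
    have "norm (a \<xi> y) \<le> norm (g \<xi> y) + norm (gb y)" unfolding a_def by (rule norm_triangle_ineq4)
    then show ?thesis using gbound[OF that, of y] gbbound[of y] by simp
  qed
  have ameas: "(\<lambda>\<xi>. a \<xi> y) \<in> borel_measurable P" for y
    unfolding a_def by (intro borel_measurable_diff gmeas borel_measurable_const)
  have Omeas: "(\<lambda>\<xi>. outer (a \<xi> y) (a \<xi> y)) \<in> borel_measurable P" for y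
  proof (rule meas_vec)
    fix i show "(\<lambda>\<xi>. outer (a \<xi> y) (a \<xi> y) $ i) \<in> borel_measurable P"
    proof (rule meas_vec)
      fix j show "(\<lambda>\<xi>. outer (a \<xi> y) (a \<xi> y) $ i $ j) \<in> borel_measurable P"
        by (simp add: borel_measurable_times meas_nth ameas)
    qed
  qed
  have Oint: "integrable P (\<lambda>\<xi>. outer (a \<xi> y) (a \<xi> y))" for y
  proof (rule P.integrable_const_bound[where B="(2 * L1) * (2 * L1)"])
    show "AE \<xi> in P. norm (outer (a \<xi> y) (a \<xi> y)) \<le> (2 * L1) * (2 * L1)"
    proof (rule AE_I2)
      fix \<xi> assume "\<xi> \<in> space P"
      then have "norm (a \<xi> y) \<le> 2 * L1" by (rule abound)
      then show "norm (outer (a \<xi> y) (a \<xi> y)) \<le> (2 * L1) * (2 * L1)"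
        unfolding norm_outer using L10 by (intro mult_mono) auto
    qed
  qed (rule Omeas)
  have Sij: "Sigma_SGD P V y $ i $ j = (\<integral>\<xi>. a \<xi> y $ i * a \<xi> y $ j \<partial>P)" for y i j
  proof -
    have "(\<integral>\<xi>. outer (a \<xi> y) (a \<xi> y) $ i $ j \<partial>P) = (\<integral>\<xi>. outer (a \<xi> y) (a \<xi> y) \<partial>P) $ i $ j"
      by (rule integral_bounded_linear[OF bounded_linear_compose[OF bounded_linear_vec_nth bounded_linear_vec_nth] Oint])
    then show ?thesis by (simp add: Sig)
  qed
  have part3: "lambda_max (Sigma_SGD P V x) \<le> 4 * L1\<^sup>2" for x
  proof -
    define S where "S = Sigma_SGD P V x"
    have rb: "r \<le> 4 * L1\<^sup>2" if r: "poly (charpoly S) r = 0" for r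
    proof -
      obtain v where v: "v \<noteq> 0" "S *v v = r *\<^sub>R v" using eig_of_root[OF r] by blast
      have blT: "bounded_linear (\<lambda>M::real^'n^'n. v \<bullet> (M *v v))"
        unfolding linear_conv_bounded_linear[symmetric]
        by (rule linearI) (simp_all add: matrix_vector_mult_add_rdistrib inner_add_right
            scaleR_matrix_vector_assoc[symmetric])
      have ov: "outer u u *v v = (u \<bullet> v) *\<^sub>R u" for u :: "real^'n"
        by (simp add: vec_eq_iff matrix_vector_mult_def inner_vec_def sum_distrib_left sum_distrib_right mult_ac)
      have "r * (v \<bullet> v) = v \<bullet> (S *v v)" using v by simp
      also have "\<dots> = (\<integral>\<xi>. v \<bullet> (outer (a \<xi> x) (a \<xi> x) *v v) \<partial>P)"
        unfolding S_def Sig by (rule integral_bounded_linear[OF blT Oint, symmetric])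
      also have "\<dots> = (\<integral>\<xi>. (a \<xi> x \<bullet> v)\<^sup>2 \<partial>P)"
        by (simp add: ov power2_eq_square inner_commute)
      also have "\<dots> \<le> (2 * L1)\<^sup>2 * (v \<bullet> v)"
      proof (rule int_le_c[OF P])
        fix \<xi> assume \<xi>: "\<xi> \<in> space P"
        have "(a \<xi> x \<bullet> v)\<^sup>2 \<le> (norm (a \<xi> x) * norm v)\<^sup>2"
          using power_mono[OF Cauchy_Schwarz_ineq2[of "a \<xi> x" v] abs_ge_zero, of 2] by simp
        also have "\<dots> \<le> (2 * L1 * norm v)\<^sup>2"
          using abound[OF \<xi>] by (intro power_mono mult_right_mono) auto
        finally show "(a \<xi> x \<bullet> v)\<^sup>2 \<le> (2 * L1)\<^sup>2 * (v \<bullet> v)"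
          by (simp add: power_mult_distrib power2_norm_eq_inner)
      qed simp
      finally have "r * (v \<bullet> v) \<le> (4 * L1\<^sup>2) * (v \<bullet> v)" by (simp add: power_mult_distrib)
      moreover have "v \<bullet> v > 0" using v by simp
      ultimately show ?thesis by simp
    qed
    have "charpoly S \<noteq> 0"
    proof
      assume "charpoly S = 0"
      then have "poly (charpoly S) (4 * L1\<^sup>2 + 1) = 0" by simp
      from rb[OF this] show False by simp
    qed
    then have fin: "finite {r. poly (charpoly S) r = 0}" by (rule poly_roots_finite)
    have symS: "S $ i $ j = S $ j $ i" for i j unfolding S_def Sij by (simp add: mult.commute)
    have ne: "{r. poly (charpoly S) r = 0} \<noteq> {}" using sym_eig[OF symS] by blast
    show ?thesis unfolding S_def[symmetric] lambda_max_def
      using fin ne rb by simp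
  qed
  have part2: "norm (mdiv (Sigma_SGD P V) x) \<le> 4 * (real CARD('n) + 1) * L1 * L2" for x
  proof -
    define A where "A \<xi> h = frechet_derivative (g \<xi>) (at x) h - Db x h" for \<xi> h
    have da: "(a \<xi> has_derivative A \<xi>) (at x)" if "\<xi> \<in> space P" for \<xi>
    proof -
      have "((\<lambda>y. g \<xi> y - gb y) has_derivative (\<lambda>h. frechet_derivative (g \<xi>) (at x) h - Db x h)) (at x)"
        by (rule has_derivative_diff[OF dg[OF that] dgb])
      then show ?thesis unfolding a_def[abs_def] A_def[abs_def] by simp
    qed
    have lipa: "norm (a \<xi> y - a \<xi> z) \<le> (2 * L2) * norm (y - z)" if "\<xi> \<in> space P" for \<xi> y z
    proof -
      have "a \<xi> y - a \<xi> z = (g \<xi> y - g \<xi> z) - (gb y - gb z)" by (simp add: a_def)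
      then have "norm (a \<xi> y - a \<xi> z) \<le> norm (g \<xi> y - g \<xi> z) + norm (gb y - gb z)"
        by (metis norm_triangle_ineq4)
      then show ?thesis using lipg[OF that, of y z] lipgb[of y z] by simp
    qed
    have Abound: "norm (A \<xi> h) \<le> (2 * L2) * norm h" if "\<xi> \<in> space P" for \<xi> h
      by (rule deriv_bound[OF da[OF that] lipa[OF that]])
    have linA: "linear (A \<xi>)" if "\<xi> \<in> space P" for \<xi>
      using has_derivative_bounded_linear[OF da[OF that]] bounded_linear.linear by blast
    define F where "F \<xi> y = outer (a \<xi> y) (a \<xi> y)" for \<xi> y
    define F' where "F' \<xi> h = outer (a \<xi> x) (A \<xi> h) + outer (A \<xi> h) (a \<xi> x)" for \<xi> h
    have dF: "(F \<xi> has_derivative F' \<xi>) (at x)" if "\<xi> \<in> space P" for \<xi>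
      unfolding F_def[abs_def] F'_def[abs_def]
      by (rule bounded_bilinear.FDERIV[OF bb_outer da[OF that] da[OF that]])
    have lipF: "norm (F \<xi> y - F \<xi> z) \<le> (8 * L1 * L2) * norm (y - z)" if \<xi>: "\<xi> \<in> space P" for \<xi> y z
    proof -
      have "F \<xi> y - F \<xi> z = outer (a \<xi> y - a \<xi> z) (a \<xi> y) + outer (a \<xi> z) (a \<xi> y - a \<xi> z)"
        by (simp add: F_def vec_eq_iff algebra_simps)
      then have "norm (F \<xi> y - F \<xi> z) \<le> norm (a \<xi> y - a \<xi> z) * norm (a \<xi> y) + norm (a \<xi> z) * norm (a \<xi> y - a \<xi> z)"
        by (metis norm_outer norm_triangle_ineq)
      also have "\<dots> \<le> ((2 * L2) * norm (y - z)) * (2 * L1) + (2 * L1) * ((2 * L2) * norm (y - z))"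
        using lipa[OF \<xi>, of y z] abound[OF \<xi>, of y] abound[OF \<xi>, of z] L10 L20
        by (intro add_mono mult_mono) auto
      finally show ?thesis by (simp add: algebra_simps)
    qed
    have L0: "0 \<le> 8 * L1 * L2" using L10 L20 by simp
    have Fmeas: "(\<lambda>\<xi>. F \<xi> y) \<in> borel_measurable P" for y unfolding F_def by (rule Omeas)
    have Fint: "integrable P (\<lambda>\<xi>. F \<xi> y)" for y unfolding F_def by (rule Oint)
    have Sig': "Sigma_SGD P V = (\<lambda>y. \<integral>\<xi>. F \<xi> y \<partial>P)" by (simp add: fun_eq_iff Sig F_def)
    have dS: "(Sigma_SGD P V has_derivative (\<lambda>h. \<integral>\<xi>. F' \<xi> h \<partial>P)) (at x)"
      unfolding Sig' by (rule deriv_integral[OF P, where L="8 * L1 * L2"]) (blast intro: dF lipF L0 Fmeas Fint)+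
    have F'int: "integrable P (\<lambda>\<xi>. F' \<xi> h)" for h
      by (rule deriv_integrable[OF P, where L="8 * L1 * L2"]) (blast intro: dF lipF Fmeas)+
    have blij: "bounded_linear (\<lambda>M::real^'n^'n. M $ i $ j)" for i j
      by (rule bounded_linear_compose[OF bounded_linear_vec_nth bounded_linear_vec_nth])
    define c where "c \<xi> = (\<chi> i. \<Sum>j\<in>UNIV. F' \<xi> (axis j 1) $ i $ j)" for \<xi>
    have cint: "integrable P c"
    proof (rule integrable_vec)
      fix i
      show "integrable P (\<lambda>\<xi>. c \<xi> $ i)" unfolding c_def
        by (simp, intro Bochner_Integration.integrable_sum integrable_bounded_linear[OF blij F'int])
    qed
    have mdiv_eq: "mdiv (Sigma_SGD P V) x = (\<integral>\<xi>. c \<xi> \<partial>P)"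
    proof -
      have fd: "frechet_derivative (\<lambda>y. Sigma_SGD P V y $ i $ j) (at x) = (\<lambda>h. (\<integral>\<xi>. F' \<xi> h \<partial>P) $ i $ j)" for i j
        by (rule frechet_derivative_at[symmetric], rule bounded_linear.has_derivative[OF blij dS])
      have "mdiv (Sigma_SGD P V) x $ i = (\<integral>\<xi>. c \<xi> \<partial>P) $ i" for i
      proof -
        have "mdiv (Sigma_SGD P V) x $ i = (\<Sum>j\<in>UNIV. (\<integral>\<xi>. F' \<xi> (axis j 1) \<partial>P) $ i $ j)"
          by (simp add: mdiv_def fd)
        also have "\<dots> = (\<Sum>j\<in>UNIV. \<integral>\<xi>. F' \<xi> (axis j 1) $ i $ j \<partial>P)"
          by (intro sum.cong refl integral_bounded_linear[OF blij F'int, symmetric])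
        also have "\<dots> = (\<integral>\<xi>. (\<Sum>j\<in>UNIV. F' \<xi> (axis j 1) $ i $ j) \<partial>P)"
          by (rule Bochner_Integration.integral_sum[symmetric], rule integrable_bounded_linear[OF blij F'int])
        also have "\<dots> = (\<integral>\<xi>. c \<xi> $ i \<partial>P)" by (simp add: c_def)
        also have "\<dots> = (\<integral>\<xi>. c \<xi> \<partial>P) $ i"
          by (rule integral_bounded_linear[OF bounded_linear_vec_nth cint])
        finally show ?thesis .
      qed
      then show ?thesis by (simp add: vec_eq_iff)
    qed
    have cbound: "norm (c \<xi>) \<le> 4 * (real CARD('n) + 1) * L1 * L2" if \<xi>: "\<xi> \<in> space P" for \<xi>
    proof -
      define u where "u = a \<xi> x"
      define tr where "tr = (\<Sum>j\<in>UNIV. A \<xi> (axis j 1) $ j)"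
      have Au: "A \<xi> u = (\<Sum>j\<in>UNIV. u$j *\<^sub>R A \<xi> (axis j 1))"
      proof -
        have "A \<xi> u = A \<xi> (\<Sum>j\<in>UNIV. u$j *\<^sub>R axis j 1)" using vec_expand[of u] by simp
        also have "\<dots> = (\<Sum>j\<in>UNIV. u$j *\<^sub>R A \<xi> (axis j 1))"
          by (simp add: linear_sum[OF linA[OF \<xi>]] linear_scale[OF linA[OF \<xi>]])
        finally show ?thesis .
      qed
      have ceq: "c \<xi> = tr *\<^sub>R u + A \<xi> u"
        unfolding Au by (simp add: vec_eq_iff c_def F'_def u_def tr_def sum_component sum.distrib
            sum_distrib_left mult.commute)
      have trb: "\<bar>tr\<bar> \<le> real CARD('n) * (2 * L2)"
      proof -
        have "\<bar>tr\<bar> \<le> (\<Sum>j\<in>UNIV. \<bar>A \<xi> (axis j 1) $ j\<bar>)" unfolding tr_def by (rule sum_abs)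
        also have "\<dots> \<le> (\<Sum>j\<in>(UNIV::'n set). 2 * L2)"
        proof (rule sum_mono)
          fix j :: 'n
          have "\<bar>A \<xi> (axis j 1) $ j\<bar> \<le> norm (A \<xi> (axis j 1))" by (rule component_le_norm_cart)
          also have "\<dots> \<le> 2 * L2" using Abound[OF \<xi>, of "axis j 1"] by simp
          finally show "\<bar>A \<xi> (axis j 1) $ j\<bar> \<le> 2 * L2" .
        qed
        finally show ?thesis by simp
      qed
      have nu: "norm u \<le> 2 * L1" unfolding u_def by (rule abound[OF \<xi>])
      have "norm (c \<xi>) \<le> \<bar>tr\<bar> * norm u + norm (A \<xi> u)"
        unfolding ceq by (metis norm_scaleR norm_triangle_ineq)
      also have "\<dots> \<le> (real CARD('n) * (2 * L2)) * (2 * L1) + (2 * L2) * (2 * L1)"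
        using trb nu Abound[OF \<xi>, of u] L10 L20
        by (intro add_mono mult_mono order_trans[OF Abound[OF \<xi>, of u]]) auto
      also have "\<dots> = 4 * (real CARD('n) + 1) * L1 * L2" by (simp add: algebra_simps)
      finally show ?thesis .
    qed
    have "norm (mdiv (Sigma_SGD P V) x) \<le> (\<integral>\<xi>. norm (c \<xi>) \<partial>P)"
      unfolding mdiv_eq by (rule integral_norm_bound)
    also have "\<dots> \<le> 4 * (real CARD('n) + 1) * L1 * L2"
      by (rule int_le_c[OF P]) (use cbound L10 L20 in auto)
    finally show ?thesis .
  qed
  show ?thesis using P1 part2 part3 by blast
qed

end
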